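(* Let $N,\beta,\mu,\gamma>0$ with $\frac{\beta N}{\mu+\gamma}>1$ and $*:=N-\frac{\mu+\gamma}{\beta}$. For $a\in(0,N)$, $T>0$ and $\phi\in C([0,T])$ let $$I_{a,T}(\phi)=\inf\Big\{\tfrac12\int_0^T|u(s)|^2ds:\ u\in L^2([0,T]),\ \phi(t)=a+\int_0^t\phi(s)(\beta N-\mu-\gamma-\beta\phi(s))ds+\int_0^t\phi(s)(N-\phi(s))u(s)ds\ \ \forall t\in[0,T]\Big\}$$ (with $\inf\emptyset=\infty$). Let $\delta_0>0$ be sufficiently small, $m>0$, $\rho\in(0,*-\delta_0)$, and $$\overline{V}_{m,\rho}:=\inf_{T\le m}\ \inf_{\phi\in C([0,T]),\ \phi(T)=\rho} I_{*-\delta_0,T}(\phi).$$ If $\overline{V}_{m,\rho}<\infty$, then there exist $T\le m$ and a decreasing $\phi\in C([0,T])$ such that $T$ is the first time $\phi$ hits $\rho$ (i.e. $\phi(T)=\rho$ and $\phi(t)\neq\rho$ for $t<T$), $\overline{V}_{m,\rho}=I_{*-\delta_0,T}(\phi)$, and $\phi(t)\in[\rho,*-\delta_0]$ for all $t\in[0,T]$.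
   Context: $I_{a,T}$ is the large-deviation rate function associated with the SDE $dI=I([\beta N-\mu-\gamma-\beta I]dt+\sigma(N-I)dB)$ started at $a$ on the time interval $[0,T]$. *)

theory Defs
  imports "HOL-Analysis.Analysis"
begin

definition admissible_control ::
  "real \<Rightarrow> real \<Rightarrow> real \<Rightarrow> real \<Rightarrow> real \<Rightarrow> real \<Rightarrow> (real \<Rightarrow> real) \<Rightarrow> (real \<Rightarrow> real) \<Rightarrow> bool" where
  "admissible_control N \<beta> \<mu> \<gamma> a T \<phi> u \<longleftrightarrow>
     set_borel_measurable lborel {0..T} u \<and>
     set_integrable lborel {0..T} (\<lambda>s. (u s)\<^sup>2) \<and>
     (\<forall>t\<in>{0..T}. \<phi> t = a
        + (LINT s:{0..t}|lborel. \<phi> s * (\<beta> * N - \<mu> - \<gamma> - \<beta> * \<phi> s))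
        + (LINT s:{0..t}|lborel. \<phi> s * (N - \<phi> s) * u s))"

definition rate_fun ::
  "real \<Rightarrow> real \<Rightarrow> real \<Rightarrow> real \<Rightarrow> real \<Rightarrow> real \<Rightarrow> (real \<Rightarrow> real) \<Rightarrow> ereal" where
  "rate_fun N \<beta> \<mu> \<gamma> a T \<phi> =
     Inf {ereal ((1/2) * (LINT s:{0..T}|lborel. (u s)\<^sup>2)) | u.
            admissible_control N \<beta> \<mu> \<gamma> a T \<phi> u}"

definition Vbar ::
  "real \<Rightarrow> real \<Rightarrow> real \<Rightarrow> real \<Rightarrow> real \<Rightarrow> real \<Rightarrow> real \<Rightarrow> ereal" where
  "Vbar N \<beta> \<mu> \<gamma> a m \<rho> =
     Inf {rate_fun N \<beta> \<mu> \<gamma> a T \<phi> | T \<phi>.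
            0 < T \<and> T \<le> m \<and> continuous_on {0..T} \<phi> \<and> \<phi> T = \<rho>}"

end

theory Submission
  imports Defs "HOL-Analysis.Analysis"
begin


lemma lborel_abs_int:
  fixes f :: "real \<Rightarrow> real"
  assumes "set_integrable lborel S f"
  shows "f absolutely_integrable_on S"
  using set_borel_integral_eq_integral(1)[OF assms]
    set_borel_integral_eq_integral(1)[OF set_integrable_abs[OF assms]]
  by (simp add: absolutely_integrable_on_def)

lemma intcm: "f integrable_on S \<Longrightarrow> (\<lambda>x. (c::real) * f x) integrable_on S"
  using integrable_on_cmult_left[of f S c] by simp

lemma chain_step:
  fixes \<psi> h g G k :: "real \<Rightarrow> real" and x y p q z e :: real
  assumes xy: "x \<le> y"
    and cont: "continuous_on {x..y} \<psi>"
    and rng: "\<And>r. r \<in> {x..y} \<Longrightarrow> \<psi> r \<in> {p..q}"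
    and Gd: "\<And>v. v \<in> {p..q} \<Longrightarrow> (G has_real_derivative g v) (at v within {p..q})"
  shows "\<exists>r0\<in>{x..y}. G (\<psi> y) - G (\<psi> x) = g (\<psi> r0) * (\<psi> y - \<psi> x)"
proof -
  have Gc: "continuous_on {p..q} G"
    using Gd DERIV_continuous continuous_on_eq_continuous_within by blast
  have mvt: "\<exists>z. lo \<le> z \<and> z \<le> hi \<and> G hi - G lo = g z * (hi - lo)"
    if "lo \<le> hi" "lo \<in> {p..q}" "hi \<in> {p..q}" for lo hi
  proof (cases "lo = hi")
    case True then show ?thesis by auto
  next
    case False
    then have lh: "lo < hi" using that by auto
    have c: "continuous_on {lo..hi} G"
      using Gc that by (auto intro: continuous_on_subset)
    have d: "(G has_real_derivative g v) (at v)" if "lo < v" "v < hi" for v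
    proof -
      have "v \<in> {p..q}" "p < v" "v < q" using that \<open>lo \<in> {p..q}\<close> \<open>hi \<in> {p..q}\<close> by auto
      then show ?thesis using Gd[of v] at_within_Icc_at[of p v q] by simp
    qed
    obtain l z where z: "lo < z" "z < hi" "(G has_real_derivative l) (at z)" "G hi - G lo = (hi - lo) * l"
      using MVT[OF lh c] d real_differentiable_def by meson
    have "l = g z" using DERIV_unique[OF z(3) d[OF z(1,2)]] .
    then show ?thesis using z by (intro exI[of _ z]) (auto simp: algebra_simps)
  qed
  have px: "\<psi> x \<in> {p..q}" and py: "\<psi> y \<in> {p..q}" using rng xy by auto
  show ?thesis
  proof (cases "\<psi> x \<le> \<psi> y")
    case True
    obtain z where z: "\<psi> x \<le> z" "z \<le> \<psi> y" "G (\<psi> y) - G (\<psi> x) = g z * (\<psi> y - \<psi> x)"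
      using mvt[OF True px py] by blast
    obtain r0 where "r0 \<ge> x" "r0 \<le> y" "\<psi> r0 = z" using IVT'[of \<psi> x z y, OF z(1,2) xy cont] by blast
    then show ?thesis using z by auto
  next
    case False
    obtain z where z: "\<psi> y \<le> z" "z \<le> \<psi> x" "G (\<psi> x) - G (\<psi> y) = g z * (\<psi> x - \<psi> y)"
      using mvt[OF _ py px] False by fastforce
    obtain r0 where "r0 \<ge> x" "r0 \<le> y" "\<psi> r0 = z" using IVT2'[of \<psi> y z x, OF z(1,2) xy cont] by blast
    then show ?thesis using z by (intro bexI[of _ r0]) (auto simp: algebra_simps)
  qed
qed

lemma chain_rule_AC:
  fixes \<psi> h g G :: "real \<Rightarrow> real" and s t p q :: real
  assumes st: "s \<le> t"
    and cont: "continuous_on {s..t} \<psi>"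
    and rng: "\<And>r. r \<in> {s..t} \<Longrightarrow> \<psi> r \<in> {p..q}"
    and hint: "h absolutely_integrable_on {s..t}"
    and eq: "\<And>r. r \<in> {s..t} \<Longrightarrow> \<psi> r = \<psi> s + integral {s..r} h"
    and Gd: "\<And>x. x \<in> {p..q} \<Longrightarrow> (G has_real_derivative g x) (at x within {p..q})"
    and gc: "continuous_on {p..q} g"
  shows "G (\<psi> t) - G (\<psi> s) = integral {s..t} (\<lambda>r. g (\<psi> r) * h r)"
proof -
  define k where "k = (\<lambda>r. g (\<psi> r))"
  have kc: "continuous_on {s..t} k"
    unfolding k_def using continuous_on_compose2[OF gc cont] rng by blast
  have kb: "bounded (k ` {s..t})"
    using compact_continuous_image[OF kc] compact_imp_bounded by blast
  have kh: "(\<lambda>r. k r * h r) absolutely_integrable_on {s..t}"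
    by (rule absolutely_integrable_bounded_measurable_product_real[OF
          continuous_imp_measurable_on_sets_lebesgue[OF kc] _ kb hint]) auto
  have hI: "h integrable_on {x..y}" if "s \<le> x" "y \<le> t" for x y
    using absolutely_integrable_on_subinterval[OF hint, of x y] that
      set_lebesgue_integral_eq_integral(1) by fastforce
  have ahI: "(\<lambda>r. \<bar>h r\<bar>) integrable_on {x..y}" if "s \<le> x" "y \<le> t" for x y
    using absolutely_integrable_on_subinterval[OF absolutely_integrable_abs[OF hint], of x y] that
      set_lebesgue_integral_eq_integral(1) by fastforce
  have khI: "(\<lambda>r. k r * h r) integrable_on {x..y}" if "s \<le> x" "y \<le> t" for x y
    using absolutely_integrable_on_subinterval[OF kh, of x y] that
      set_lebesgue_integral_eq_integral(1) by fastforce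
  define D where "D r = G (\<psi> r) - integral {s..r} (\<lambda>r. k r * h r)" for r
  define H where "H r = integral {s..r} (\<lambda>r. \<bar>h r\<bar>)" for r
  have step: "\<exists>d>0. \<forall>x y. s \<le> x \<longrightarrow> x \<le> y \<longrightarrow> y \<le> t \<longrightarrow> y - x < d \<longrightarrow>
      \<bar>D y - D x\<bar> \<le> e * (H y - H x)" if e: "e > 0" for e
  proof -
    obtain d where d: "d > 0" and dk: "\<And>x x'. x \<in> {s..t} \<Longrightarrow> x' \<in> {s..t} \<Longrightarrow> dist x' x < d \<Longrightarrow> dist (k x') (k x) < e"
      using compact_uniformly_continuous[OF kc compact_Icc] e
      unfolding uniformly_continuous_on_def by metis
    show ?thesis
    proof (intro exI[of _ d] conjI allI impI d)
      fix x y assume xy: "s \<le> x" "x \<le> y" "y \<le> t" "y - x < d"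
      obtain r0 where r0: "r0 \<in> {x..y}" "G (\<psi> y) - G (\<psi> x) = g (\<psi> r0) * (\<psi> y - \<psi> x)"
      proof -
        have cxy: "continuous_on {x..y} \<psi>" using cont by (rule continuous_on_subset) (use xy in auto)
        have rxy: "\<And>r. r \<in> {x..y} \<Longrightarrow> \<psi> r \<in> {p..q}" using rng xy by auto
        show ?thesis using chain_step[OF xy(2) cxy rxy Gd] that by blast
      qed
      have comb: "integral {s..x} f + integral {x..y} f = integral {s..y} f" if "f integrable_on {s..y}" for f :: "real \<Rightarrow> real"
        using Henstock_Kurzweil_Integration.integral_combine[of s x y f] that xy by auto
      have e1: "\<psi> x = \<psi> s + integral {s..x} h" by (rule eq) (use xy in auto)
      have e2: "\<psi> y = \<psi> s + integral {s..y} h" by (rule eq) (use xy in auto)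
      have psd: "\<psi> y - \<psi> x = integral {x..y} h"
        using e1 e2 comb[OF hI[of s y]] xy by linarith
      have c2: "integral {s..x} (\<lambda>r. k r * h r) + integral {x..y} (\<lambda>r. k r * h r) = integral {s..y} (\<lambda>r. k r * h r)"
        using comb[OF khI[of s y]] xy by auto
      have "D y - D x = (G (\<psi> y) - G (\<psi> x)) - integral {x..y} (\<lambda>r. k r * h r)"
        unfolding D_def using c2 by linarith
      also have "\<dots> = k r0 * integral {x..y} h - integral {x..y} (\<lambda>r. k r * h r)"
        by (simp add: r0(2) psd k_def)
      finally have "D y - D x = k r0 * integral {x..y} h - integral {x..y} (\<lambda>r. k r * h r)" .
      also have "\<dots> = integral {x..y} (\<lambda>r. k r0 * h r - k r * h r)"
        using hI[of x y] khI[of x y] xy by (subst integral_diff) (auto intro: intcm)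
      also have "\<dots> = integral {x..y} (\<lambda>r. (k r0 - k r) * h r)"
        by (simp add: algebra_simps)
      finally have Dd: "D y - D x = integral {x..y} (\<lambda>r. (k r0 - k r) * h r)" .
      have "\<bar>integral {x..y} (\<lambda>r. (k r0 - k r) * h r)\<bar> \<le> integral {x..y} (\<lambda>r. e * \<bar>h r\<bar>)"
      proof -
        have "norm (integral {x..y} (\<lambda>r. (k r0 - k r) * h r)) \<le> integral {x..y} (\<lambda>r. e * \<bar>h r\<bar>)"
        proof (rule integral_norm_bound_integral)
          have "(\<lambda>r. k r0 * h r - k r * h r) integrable_on {x..y}"
            using hI[of x y] khI[of x y] xy by (intro integrable_diff) (auto intro: intcm)
          then show "(\<lambda>r. (k r0 - k r) * h r) integrable_on {x..y}"
            by (simp add: algebra_simps)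
          show "(\<lambda>r. e * \<bar>h r\<bar>) integrable_on {x..y}"
            using ahI[of x y] xy by (simp add: intcm)
          fix r assume r: "r \<in> {x..y}"
          have "dist (k r) (k r0) < e"
            using dk[of r0 r] r r0 xy by (auto simp: dist_real_def)
          then have "\<bar>k r0 - k r\<bar> \<le> e" by (simp add: dist_real_def)
          then show "norm ((k r0 - k r) * h r) \<le> e * \<bar>h r\<bar>"
            by (simp add: abs_mult mult_right_mono)
        qed
        then show ?thesis by simp
      qed
      also have "\<dots> = e * (H y - H x)"
        unfolding H_def using comb[OF ahI[of s y]] xy by simp
      finally show "\<bar>D y - D x\<bar> \<le> e * (H y - H x)" using Dd by simp
    qed
  qed
  have Hnn: "H y \<ge> 0" if "s \<le> y" "y \<le> t" for y
    unfolding H_def by (rule integral_nonneg) (use ahI[of s y] that in auto)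
  have main: "\<bar>D t - D s\<bar> \<le> e * H t" if e: "e > 0" for e
  proof -
    obtain d where d: "d > 0" and dD: "\<And>x y. s \<le> x \<Longrightarrow> x \<le> y \<Longrightarrow> y \<le> t \<Longrightarrow> y - x < d \<Longrightarrow>
      \<bar>D y - D x\<bar> \<le> e * (H y - H x)"
      using step[OF e] by blast
    obtain n :: nat where n: "(t - s) / d < real n" using reals_Archimedean2 by blast
    have "(t - s) / d \<ge> 0" using st d by simp
    then have "real n > 0" using n by linarith
    then have npos: "n > 0" by simp
    define w where "w = (t - s) / n"
    have w: "w \<ge> 0" "w < d" using n npos st d by (auto simp: w_def field_simps)
    have nw: "real n * w = t - s" using npos by (simp add: w_def)
    have ind: "j \<le> n \<Longrightarrow> \<bar>D (s + j * w) - D s\<bar> \<le> e * H (s + j * w)" for j :: nat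
    proof (induction j)
      case 0 then show ?case by (simp add: D_def H_def)
    next
      case (Suc j)
      have jw: "real j * w \<le> real n * w" using Suc.prems w by (intro mult_right_mono) auto
      have jw1: "real (Suc j) * w \<le> real n * w" using Suc.prems w by (intro mult_right_mono) auto
      have jw0: "real j * w \<ge> 0" using w by simp
      have sj: "s + real (Suc j) * w = (s + real j * w) + w" by (simp add: algebra_simps)
      have a: "\<bar>D (s + Suc j * w) - D (s + j * w)\<bar> \<le> e * (H (s + Suc j * w) - H (s + j * w))"
        unfolding sj by (rule dD) (use w jw jw1 nw sj jw0 in linarith)+
      have b: "\<bar>D (s + j * w) - D s\<bar> \<le> e * H (s + j * w)" using Suc by auto
      have "e * (H (s + Suc j * w) - H (s + j * w)) + e * H (s + j * w) = e * H (s + Suc j * w)"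
        by (simp add: algebra_simps)
      then show ?case using a b by linarith
    qed
    show ?thesis using ind[of n] nw by simp
  qed
  have "D t = D s"
  proof (rule ccontr)
    assume ne: "D t \<noteq> D s"
    define e where "e = \<bar>D t - D s\<bar> / (2 * (H t + 1))"
    have e: "e > 0" using ne Hnn[of t] st by (auto simp: e_def)
    have "\<bar>D t - D s\<bar> \<le> e * H t" using main[OF e] .
    also have "\<dots> \<le> e * (H t + 1)" using e by simp
    also have "\<dots> = \<bar>D t - D s\<bar> / 2" using Hnn[of t] st by (simp add: e_def field_simps)
    also have "\<dots> < \<bar>D t - D s\<bar>" using ne by simp
    finally show False by simp
  qed
  then show ?thesis by (simp add: D_def k_def)
qed



lemma set_integrable_add':
  fixes f g :: "real \<Rightarrow> real"
  assumes "set_integrable M A f" "set_integrable M A g"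
  shows "set_integrable M A (\<lambda>x. f x + g x)"
  using Bochner_Integration.integrable_add[OF assms[unfolded set_integrable_def]]
  unfolding set_integrable_def by (simp add: algebra_simps)

lemma set_borel_measurable_mult':
  fixes f g :: "real \<Rightarrow> real"
  assumes "set_borel_measurable M A f" "set_borel_measurable M A g"
  shows "set_borel_measurable M A (\<lambda>x. f x * g x)"
proof -
  have "(\<lambda>x. (indicator A x *\<^sub>R f x) * (indicator A x *\<^sub>R g x)) \<in> borel_measurable M"
    using assms unfolding set_borel_measurable_def by measurable
  moreover have "(\<lambda>x. (indicator A x *\<^sub>R f x) * (indicator A x *\<^sub>R g x)) = (\<lambda>x. indicator A x *\<^sub>R (f x * g x))"
    by (auto simp: indicator_def)
  ultimately show ?thesis unfolding set_borel_measurable_def by simp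
qed

lemma set_borel_measurable_cont:
  fixes f :: "real \<Rightarrow> real"
  assumes "continuous_on {x..y} f"
  shows "set_borel_measurable lborel {x..y} f"
  using set_measurable_continuous_on[OF _ assms] unfolding set_borel_measurable_def by simp

lemma pw_ineq:
  fixes bb FF ss cc uu :: real
  assumes "ss > 0" "FF\<^sup>2 = bb\<^sup>2 + 2*cc* ss\<^sup>2"
  shows "(1/2)*uu\<^sup>2 + (bb + FF)/ss\<^sup>2 * (bb + ss*uu) + cc = (ss*uu + bb + FF)\<^sup>2 / (2* ss\<^sup>2)"
proof -
  have "2*cc* ss\<^sup>2 = FF\<^sup>2 - bb\<^sup>2" using assms by simp
  then have cc: "cc = (FF\<^sup>2 - bb\<^sup>2) / (2* ss\<^sup>2)" using assms(1) by (simp add: field_simps)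
  show ?thesis unfolding cc using assms(1) by (simp add: field_simps power2_eq_square)
qed



lemma inverse_path:
  fixes F :: "real \<Rightarrow> real" and \<rho> a :: real
  assumes ra: "\<rho> < a" and Fc: "continuous_on {\<rho>..a} F" and Fp: "\<And>y. y \<in> {\<rho>..a} \<Longrightarrow> F y > 0"
  shows "\<exists>\<phi>. integral {\<rho>..a} (\<lambda>y. 1 / F y) > 0 \<and>
    continuous_on {0..integral {\<rho>..a} (\<lambda>y. 1 / F y)} \<phi> \<and>
    \<phi> 0 = a \<and> \<phi> (integral {\<rho>..a} (\<lambda>y. 1 / F y)) = \<rho> \<and>
    (\<forall>t\<in>{0..integral {\<rho>..a} (\<lambda>y. 1 / F y)}. \<phi> t \<in> {\<rho>..a}) \<and>
    (\<forall>s\<in>{0..integral {\<rho>..a} (\<lambda>y. 1 / F y)}. \<forall>t\<in>{0..integral {\<rho>..a} (\<lambda>y. 1 / F y)}. s < t \<longrightarrow> \<phi> t < \<phi> s) \<and>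
    (\<forall>t\<in>{0..integral {\<rho>..a} (\<lambda>y. 1 / F y)}. ((\<lambda>r. - F (\<phi> r)) has_integral (\<phi> t - a)) {0..t})"
proof -
  define f where "f = (\<lambda>y. 1 / F y)"
  define T where "T = integral {\<rho>..a} f"
  have fc: "continuous_on {\<rho>..a} f" unfolding f_def
    using Fc Fp by (intro continuous_intros) (auto simp: less_imp_neq[symmetric])
  obtain y0 where y0: "y0 \<in> {\<rho>..a}" "\<And>y. y \<in> {\<rho>..a} \<Longrightarrow> f y0 \<le> f y"
    using continuous_attains_inf[OF compact_Icc _ fc] ra by auto
  define fm where "fm = f y0"
  have fm: "fm > 0" using Fp[OF y0(1)] by (simp add: fm_def f_def)
  define \<Theta> where "\<Theta> x = integral {\<rho>..x} f" for x
  have fI: "f integrable_on {x..y}" if "\<rho> \<le> x" "y \<le> a" for x y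
    using integrable_continuous_real[OF continuous_on_subset[OF fc]] that by auto
  have Tdiff: "\<Theta> y - \<Theta> x \<ge> fm * (y - x)" if "\<rho> \<le> x" "x \<le> y" "y \<le> a" for x y
  proof -
    have "integral {\<rho>..x} f + integral {x..y} f = integral {\<rho>..y} f"
      using Henstock_Kurzweil_Integration.integral_combine[of \<rho> x y f] fI[of \<rho> y] that by auto
    moreover have "integral {x..y} f \<ge> integral {x..y} (\<lambda>_. fm)"
      by (rule integral_le) (use fI[of x y] that y0 in \<open>auto simp: fm_def\<close>)
    moreover have "integral {x..y} (\<lambda>_. fm) = fm * (y - x)" using that by simp
    ultimately show ?thesis unfolding \<Theta>_def by linarith
  qed
  have Tstrict: "\<Theta> x < \<Theta> y" if "\<rho> \<le> x" "x < y" "y \<le> a" for x y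
    using Tdiff[of x y] that fm by (smt (verit) mult_pos_pos)
  have T0: "\<Theta> \<rho> = 0" by (simp add: \<Theta>_def)
  have TT: "\<Theta> a = T" by (simp add: \<Theta>_def T_def)
  have Tpos: "T > 0" using Tstrict[of \<rho> a] ra T0 TT by simp
  have Thc: "continuous_on {\<rho>..a} \<Theta>"
    unfolding \<Theta>_def using indefinite_integral_continuous_1[OF integrable_continuous_real[OF fc]] by simp
  have Tmono: "\<Theta> x \<le> \<Theta> y" if "\<rho> \<le> x" "x \<le> y" "y \<le> a" for x y
    using Tstrict[of x y] that by (cases "x = y") auto
  have img: "\<Theta> ` {\<rho>..a} = {0..T}"
  proof
    show "\<Theta> ` {\<rho>..a} \<subseteq> {0..T}"
    proof
      fix z assume "z \<in> \<Theta> ` {\<rho>..a}"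
      then obtain x where x: "x \<in> {\<rho>..a}" "z = \<Theta> x" by auto
      then show "z \<in> {0..T}" using Tmono[of \<rho> x] Tmono[of x a] T0 TT by auto
    qed
    show "{0..T} \<subseteq> \<Theta> ` {\<rho>..a}"
    proof
      fix y assume "y \<in> {0..T}"
      then obtain x where "x \<ge> \<rho>" "x \<le> a" "\<Theta> x = y"
        using IVT'[of \<Theta> \<rho> y a] T0 TT ra Thc by auto
      then show "y \<in> \<Theta> ` {\<rho>..a}" by auto
    qed
  qed
  have inj: "inj_on \<Theta> {\<rho>..a}"
  proof (rule inj_onI)
    fix x y assume "x \<in> {\<rho>..a}" "y \<in> {\<rho>..a}" "\<Theta> x = \<Theta> y"
    then show "x = y" using Tstrict[of x y] Tstrict[of y x] by (cases x y rule: linorder_cases) auto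
  qed
  define ch where "ch = inv_into {\<rho>..a} \<Theta>"
  have chi_T: "ch (\<Theta> x) = x" if "x \<in> {\<rho>..a}" for x
    unfolding ch_def using inv_into_f_f[OF inj that] .
  have T_chi: "\<Theta> (ch y) = y" if "y \<in> {0..T}" for y
    unfolding ch_def using f_inv_into_f[of y \<Theta> "{\<rho>..a}"] img that by auto
  have chi_in: "ch y \<in> {\<rho>..a}" if "y \<in> {0..T}" for y
    unfolding ch_def using inv_into_into[of y \<Theta> "{\<rho>..a}"] img that by auto
  have chic: "continuous_on {0..T} ch"
    using continuous_on_inv[OF Thc compact_Icc] chi_T img by simp
  have chi_strict: "ch x < ch y" if "x \<in> {0..T}" "y \<in> {0..T}" "x < y" for x y
  proof (rule ccontr)
    assume "\<not> ch x < ch y"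
    then have "\<Theta> (ch y) \<le> \<Theta> (ch x)" using Tmono chi_in that by auto
    then show False using T_chi that by auto
  qed
  have chi0: "ch 0 = \<rho>" using chi_T[of \<rho>] T0 ra by auto
  have chiT: "ch T = a" using chi_T[of a] TT ra by auto
  have chid: "(ch has_real_derivative F (ch y)) (at y)" if y: "0 < y" "y < T" for y
  proof -
    have yi: "y \<in> {0..T}" using y by auto
    have cin: "\<rho> < ch y" "ch y < a"
      using chi_strict[of 0 y] chi_strict[of y T] y chi0 chiT Tpos by auto
    have "(\<Theta> has_real_derivative f (ch y)) (at (ch y) within {\<rho>..a})"
      unfolding \<Theta>_def by (rule integral_has_real_derivative[OF fc]) (use cin in auto)
    then have d: "(\<Theta> has_real_derivative f (ch y)) (at (ch y))"
      using at_within_Icc_at[OF cin] by simp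
    have ne: "f (ch y) \<noteq> 0" using Fp[of "ch y"] cin by (simp add: f_def)
    have ic: "isCont ch y" using continuous_on_interior[OF chic, of y] y by simp
    have "(ch has_real_derivative inverse (f (ch y))) (at y)"
      by (rule DERIV_inverse_function[where g=ch and x=y and a=0 and b=T, OF d ne y]) (use T_chi ic in auto)
    then show ?thesis by (simp add: f_def)
  qed
  define \<phi> where "\<phi> = (\<lambda>t. ch (T - t))"
  have phic: "continuous_on {0..T} \<phi>"
    unfolding \<phi>_def by (rule continuous_on_compose2[OF chic]) (auto intro!: continuous_intros)
  have phid: "(\<phi> has_real_derivative - F (\<phi> t)) (at t)" if "0 < t" "t < T" for t
  proof -
    have "((\<lambda>t. ch (T - t)) has_real_derivative F (ch (T - t)) * (-1)) (at t)"
      by (rule DERIV_chain2[OF chid]) (use that in \<open>auto intro!: derivative_eq_intros\<close>)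
    then show ?thesis by (simp add: \<phi>_def)
  qed
  show ?thesis
  proof (intro exI[of _ \<phi>] conjI ballI impI)
    show "integral {\<rho>..a} (\<lambda>y. 1 / F y) > 0" using Tpos by (simp add: T_def f_def)
    show "continuous_on {0..integral {\<rho>..a} (\<lambda>y. 1 / F y)} \<phi>" using phic by (simp add: T_def f_def)
    show "\<phi> 0 = a" using chiT by (simp add: \<phi>_def)
    show "\<phi> (integral {\<rho>..a} (\<lambda>y. 1 / F y)) = \<rho>" using chi0 by (simp add: \<phi>_def T_def f_def)
  next
    fix t assume "t \<in> {0..integral {\<rho>..a} (\<lambda>y. 1 / F y)}"
    then have t: "t \<in> {0..T}" by (simp add: T_def f_def)
    then show "\<phi> t \<in> {\<rho>..a}" using chi_in[of "T - t"] by (simp add: \<phi>_def)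
    have "((\<lambda>r. - F (\<phi> r)) has_integral (\<phi> t - \<phi> 0)) {0..t}"
    proof (rule fundamental_theorem_of_calculus_interior)
      show "0 \<le> t" using t by simp
      show "continuous_on {0..t} \<phi>" using phic t by (auto intro: continuous_on_subset)
      fix x assume "x \<in> {0<..<t}"
      then show "(\<phi> has_vector_derivative - F (\<phi> x)) (at x)"
        using phid[of x] t by (simp add: has_real_derivative_iff_has_vector_derivative)
    qed
    then show "((\<lambda>r. - F (\<phi> r)) has_integral (\<phi> t - a)) {0..t}" using chiT by (simp add: \<phi>_def)
  next
    fix s t assume "s \<in> {0..integral {\<rho>..a} (\<lambda>y. 1 / F y)}" "t \<in> {0..integral {\<rho>..a} (\<lambda>y. 1 / F y)}" "s < t"
    then show "\<phi> t < \<phi> s" using chi_strict[of "T - t" "T - s"] by (simp add: \<phi>_def T_def f_def)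
  qed
qed



lemma inv_diff_bound:
  fixes p q bm d :: real
  assumes "bm > 0" "p \<ge> bm" "q \<ge> bm" "q\<^sup>2 - p\<^sup>2 = d"
  shows "\<bar>1/p - 1/q\<bar> \<le> \<bar>d\<bar> / (2 * bm^3)"
proof -
  have pq: "p > 0" "q > 0" using assms by auto
  have "1/p - 1/q = (q - p) / (p*q)" using pq by (simp add: field_simps)
  also have "\<dots> = d / ((q + p) * (p * q))"
  proof -
    have dd: "d = (q + p) * (q - p)" using assms(4) by (simp add: power2_eq_square algebra_simps)
    have "((q+p)*(q-p))/((q+p)*(p*q)) = (q-p)/(p*q)"
      by (rule nonzero_mult_divide_mult_cancel_left) (use pq in simp)
    then show ?thesis unfolding dd by simp
  qed
  finally have e: "\<bar>1/p - 1/q\<bar> = \<bar>d\<bar> / ((q + p) * (p * q))"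
    using pq by (simp add: abs_mult)
  have "2 * bm^3 \<le> (q + p) * (p * q)"
  proof -
    have "2 * bm \<le> q + p" using assms by simp
    moreover have "bm * bm \<le> p * q" using assms by (intro mult_mono) auto
    ultimately have "(2 * bm) * (bm * bm) \<le> (q + p) * (p * q)"
      using assms by (intro mult_mono) auto
    then show ?thesis by (simp add: power3_eq_cube algebra_simps)
  qed
  then show ?thesis unfolding e using assms
    by (intro divide_left_mono) (auto intro!: mult_pos_pos)
qed

lemma choose_c:
  fixes B S :: "real \<Rightarrow> real" and \<rho> a m :: real
  assumes ra: "\<rho> < a" and Bc: "continuous_on {\<rho>..a} B" and Sc: "continuous_on {\<rho>..a} S"
    and Bp: "\<And>y. y \<in> {\<rho>..a} \<Longrightarrow> B y > 0" and Sp: "\<And>y. y \<in> {\<rho>..a} \<Longrightarrow> S y > 0"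
    and m: "m > 0"
  shows "\<exists>c\<ge>0. integral {\<rho>..a} (\<lambda>y. 1 / sqrt ((B y)\<^sup>2 + 2*c*(S y)\<^sup>2)) \<le> m \<and>
     (c = 0 \<or> integral {\<rho>..a} (\<lambda>y. 1 / sqrt ((B y)\<^sup>2 + 2*c*(S y)\<^sup>2)) = m)"
proof -
  define Tf where "Tf c = integral {\<rho>..a} (\<lambda>y. 1 / sqrt ((B y)\<^sup>2 + 2*c*(S y)\<^sup>2))" for c
  obtain y1 where y1: "y1 \<in> {\<rho>..a}" "\<And>y. y \<in> {\<rho>..a} \<Longrightarrow> B y1 \<le> B y"
    using continuous_attains_inf[OF compact_Icc _ Bc] ra by auto
  obtain y2 where y2: "y2 \<in> {\<rho>..a}" "\<And>y. y \<in> {\<rho>..a} \<Longrightarrow> S y2 \<le> S y"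
    using continuous_attains_inf[OF compact_Icc _ Sc] ra by auto
  obtain y3 where y3: "y3 \<in> {\<rho>..a}" "\<And>y. y \<in> {\<rho>..a} \<Longrightarrow> S y \<le> S y3"
    using continuous_attains_sup[OF compact_Icc _ Sc] ra by auto
  define bm where "bm = B y1"
  define sm where "sm = S y2"
  define sM where "sM = S y3"
  have bm: "bm > 0" "\<And>y. y \<in> {\<rho>..a} \<Longrightarrow> bm \<le> B y" using Bp[OF y1(1)] y1 by (auto simp: bm_def)
  have sm: "sm > 0" "\<And>y. y \<in> {\<rho>..a} \<Longrightarrow> sm \<le> S y" using Sp[OF y2(1)] y2 by (auto simp: sm_def)
  have sM: "\<And>y. y \<in> {\<rho>..a} \<Longrightarrow> S y \<le> sM" using y3 by (auto simp: sM_def)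
  define K where "K = sM\<^sup>2 / bm^3"
  have sq_ge: "sqrt ((B y)\<^sup>2 + 2*c*(S y)\<^sup>2) \<ge> bm" if "y \<in> {\<rho>..a}" "c \<ge> 0" for y c
  proof -
    have "bm\<^sup>2 \<le> (B y)\<^sup>2" using bm that by (intro power_mono) auto
    moreover have "0 \<le> 2*c*(S y)\<^sup>2" using that by simp
    ultimately show ?thesis by (intro real_le_rsqrt) linarith
  qed
  have intg: "(\<lambda>y. 1 / sqrt ((B y)\<^sup>2 + 2*c*(S y)\<^sup>2)) integrable_on {\<rho>..a}" if "c \<ge> 0" for c
  proof (rule integrable_continuous_real)
    show "continuous_on {\<rho>..a} (\<lambda>y. 1 / sqrt ((B y)\<^sup>2 + 2*c*(S y)\<^sup>2))"
      using sq_ge[OF _ that] bm(1) Bc Sc by (intro continuous_intros) force+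
  qed
  have lip: "\<bar>Tf c - Tf c'\<bar> \<le> K * \<bar>c - c'\<bar> * (a - \<rho>)" if "c \<ge> 0" "c' \<ge> 0" for c c'
  proof -
    have "Tf c - Tf c' = integral {\<rho>..a} (\<lambda>y. 1 / sqrt ((B y)\<^sup>2 + 2*c*(S y)\<^sup>2) - 1 / sqrt ((B y)\<^sup>2 + 2*c'*(S y)\<^sup>2))"
      unfolding Tf_def using intg that by (simp add: integral_diff)
    also have "\<bar>\<dots>\<bar> \<le> integral {\<rho>..a} (\<lambda>y. K * \<bar>c - c'\<bar>)"
    proof -
      have "norm (integral {\<rho>..a} (\<lambda>y. 1 / sqrt ((B y)\<^sup>2 + 2*c*(S y)\<^sup>2) - 1 / sqrt ((B y)\<^sup>2 + 2*c'*(S y)\<^sup>2)))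
            \<le> integral {\<rho>..a} (\<lambda>y. K * \<bar>c - c'\<bar>)"
      proof (rule integral_norm_bound_integral)
        show "(\<lambda>y. 1 / sqrt ((B y)\<^sup>2 + 2*c*(S y)\<^sup>2) - 1 / sqrt ((B y)\<^sup>2 + 2*c'*(S y)\<^sup>2)) integrable_on {\<rho>..a}"
          using intg that by (intro integrable_diff) auto
        show "(\<lambda>y. K * \<bar>c - c'\<bar>) integrable_on {\<rho>..a}" by (intro integrable_continuous_real continuous_intros)
        fix y assume y: "y \<in> {\<rho>..a}"
        have nn: "0 \<le> (B y)\<^sup>2 + 2*c*(S y)\<^sup>2" "0 \<le> (B y)\<^sup>2 + 2*c'*(S y)\<^sup>2" using that by auto
        have "\<bar>1 / sqrt ((B y)\<^sup>2 + 2*c*(S y)\<^sup>2) - 1 / sqrt ((B y)\<^sup>2 + 2*c'*(S y)\<^sup>2)\<bar>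
              \<le> \<bar>2*(c'-c)*(S y)\<^sup>2\<bar> / (2 * bm^3)"
          by (rule inv_diff_bound[OF bm(1) sq_ge[OF y that(1)] sq_ge[OF y that(2)]])
             (use nn in \<open>simp add: algebra_simps\<close>)
        also have "\<dots> = \<bar>c - c'\<bar> * (S y)\<^sup>2 / bm^3"
        proof -
          have "\<bar>2*(c'-c)*(S y)\<^sup>2\<bar> = 2 * (\<bar>c - c'\<bar> * (S y)\<^sup>2)" by (simp only: abs_mult) (simp add: abs_minus_commute)
          then show ?thesis using bm(1) by simp
        qed
        also have "\<dots> \<le> \<bar>c - c'\<bar> * sM\<^sup>2 / bm^3"
          using bm(1) sm(2)[OF y] sM[OF y] sm(1)
          by (intro divide_right_mono mult_left_mono power_mono) auto
        finally show "norm (1 / sqrt ((B y)\<^sup>2 + 2*c*(S y)\<^sup>2) - 1 / sqrt ((B y)\<^sup>2 + 2*c'*(S y)\<^sup>2))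
               \<le> K * \<bar>c - c'\<bar>" by (simp add: K_def mult.commute)
      qed
      then show ?thesis by simp
    qed
    also have "\<dots> = K * \<bar>c - c'\<bar> * (a - \<rho>)" using ra by simp
    finally show ?thesis .
  qed
  have Kp: "K \<ge> 0" using bm by (simp add: K_def)
  show ?thesis
  proof (cases "Tf 0 \<le> m")
    case True
    then show ?thesis by (intro exI[of _ 0]) (simp add: Tf_def)
  next
    case False
    define C where "C = ((a - \<rho>) / (m * sm))\<^sup>2"
    have Cp: "C \<ge> 0" by (simp add: C_def)
    have TC: "Tf C \<le> m"
    proof -
      have "Tf C \<le> integral {\<rho>..a} (\<lambda>y. m / (a - \<rho>))"
        unfolding Tf_def
      proof (rule integral_le[OF intg[OF Cp]])
        show "(\<lambda>y. m / (a - \<rho>)) integrable_on {\<rho>..a}" by (intro integrable_continuous_real continuous_intros)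
        fix y assume y: "y \<in> {\<rho>..a}"
        have "((a - \<rho>) / m)\<^sup>2 \<le> 2 * C * (S y)\<^sup>2"
        proof -
          have "((a - \<rho>) / m)\<^sup>2 = C * sm\<^sup>2" using sm(1) m by (simp add: C_def field_simps)
          also have "\<dots> \<le> C * (S y)\<^sup>2" using sm y Cp by (intro mult_left_mono power_mono) auto
          also have "\<dots> \<le> 2 * C * (S y)\<^sup>2" using Cp by simp
          finally show ?thesis .
        qed
        then have w: "(a - \<rho>) / m \<le> sqrt ((B y)\<^sup>2 + 2*C*(S y)\<^sup>2)"
          by (intro real_le_rsqrt) (use zero_le_power2[of "B y"] in linarith)
        have wp: "(a - \<rho>) / m > 0" using ra m by simp
        have "1 / sqrt ((B y)\<^sup>2 + 2*C*(S y)\<^sup>2) \<le> 1 / ((a - \<rho>) / m)"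
          by (rule frac_le) (use w wp in auto)
        then show "1 / sqrt ((B y)\<^sup>2 + 2*C*(S y)\<^sup>2) \<le> m / (a - \<rho>)" by simp
      qed
      also have "\<dots> = m" using ra by simp
      finally show ?thesis .
    qed
    have Tc: "continuous_on {0..C} Tf"
      unfolding continuous_on_iff
    proof (intro ballI allI impI)
      fix x e :: real assume x: "x \<in> {0..C}" and e: "e > 0"
      define d where "d = e / ((K + 1) * (a - \<rho>))"
      have d: "d > 0" using e ra Kp by (simp add: d_def)
      show "\<exists>d>0. \<forall>x'\<in>{0..C}. dist x' x < d \<longrightarrow> dist (Tf x') (Tf x) < e"
      proof (intro exI[of _ d] conjI ballI impI d)
        fix x' assume x': "x' \<in> {0..C}" "dist x' x < d"
        have "dist (Tf x') (Tf x) \<le> K * \<bar>x' - x\<bar> * (a - \<rho>)"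
          using lip[of x' x] x x' by (simp add: dist_real_def)
        also have "\<dots> \<le> (K + 1) * \<bar>x' - x\<bar> * (a - \<rho>)"
          using ra by (intro mult_right_mono) auto
        also have "\<dots> < (K + 1) * d * (a - \<rho>)"
          using x' ra Kp by (intro mult_strict_right_mono mult_strict_left_mono) (auto simp: dist_real_def)
        also have "\<dots> = e" using ra Kp by (simp add: d_def)
        finally show "dist (Tf x') (Tf x) < e" .
      qed
    qed
    obtain c where c: "c \<ge> 0" "c \<le> C" "Tf c = m"
      using IVT2'[of Tf C m 0, OF TC _ Cp Tc] False by auto
    then show ?thesis by (intro exI[of _ c]) (simp add: Tf_def)
  qed
qed



lemma lower_bound:
  fixes N \<beta> \<mu> \<gamma> a \<rho> c m T :: real and \<psi> u F g G :: "real \<Rightarrow> real"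
  assumes ra: "\<rho> < a"
    and sp: "\<And>x. x \<in> {\<rho>..a} \<Longrightarrow> x * (N - x) > 0"
    and Fsq: "\<And>x. x \<in> {\<rho>..a} \<Longrightarrow> (F x)\<^sup>2 = (x * (\<beta> * N - \<mu> - \<gamma> - \<beta> * x))\<^sup>2 + 2 * c * (x * (N - x))\<^sup>2"
    and gdef: "\<And>x. x \<in> {\<rho>..a} \<Longrightarrow> g x = (x * (\<beta> * N - \<mu> - \<gamma> - \<beta> * x) + F x) / (x * (N - x))\<^sup>2"
    and Gd: "\<And>x. x \<in> {\<rho>..a} \<Longrightarrow> (G has_real_derivative g x) (at x within {\<rho>..a})"
    and gc: "continuous_on {\<rho>..a} g"
    and c: "c \<ge> 0" and T: "0 < T" "T \<le> m" and \<psi>c: "continuous_on {0..T} \<psi>" and \<psi>T: "\<psi> T = \<rho>"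
    and adm: "admissible_control N \<beta> \<mu> \<gamma> a T \<psi> u"
  shows "G a - G \<rho> - c * m \<le> (1/2) * (LINT s:{0..T}|lborel. (u s)\<^sup>2)"
proof -
  have um: "set_borel_measurable lborel {0..T} u"
    and u2: "set_integrable lborel {0..T} (\<lambda>s. (u s)\<^sup>2)"
    and eqn: "\<And>t. t \<in> {0..T} \<Longrightarrow> \<psi> t = a
        + (LINT s:{0..t}|lborel. \<psi> s * (\<beta> * N - \<mu> - \<gamma> - \<beta> * \<psi> s))
        + (LINT s:{0..t}|lborel. \<psi> s * (N - \<psi> s) * u s)"
    using adm unfolding admissible_control_def by auto
  define b\<psi> where "b\<psi> = (\<lambda>s. \<psi> s * (\<beta> * N - \<mu> - \<gamma> - \<beta> * \<psi> s))"
  define s\<psi> where "s\<psi> = (\<lambda>s. \<psi> s * (N - \<psi> s) * u s)"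
  have bc: "continuous_on {0..T} b\<psi>" unfolding b\<psi>_def using \<psi>c by (intro continuous_intros)
  have pc: "continuous_on {0..T} (\<lambda>s. \<psi> s * (N - \<psi> s))" using \<psi>c by (intro continuous_intros)
  obtain K where K: "K > 0" "\<And>s. s \<in> {0..T} \<Longrightarrow> norm (\<psi> s * (N - \<psi> s)) \<le> K"
    using compact_imp_bounded[OF compact_continuous_image[OF pc compact_Icc]]
    unfolding bounded_pos by auto
  have bI: "set_integrable lborel {0..T} b\<psi>" by (rule borel_integrable_atLeastAtMost'[OF bc])
  have sI: "set_integrable lborel {0..T} s\<psi>"
  proof (rule set_integrable_bound[where f="\<lambda>r. K + K * (u r)\<^sup>2"])
    show "set_integrable lborel {0..T} (\<lambda>r. K + K * (u r)\<^sup>2)"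
      by (rule set_integrable_add') (auto intro: borel_integrable_atLeastAtMost' u2)
    show "set_borel_measurable lborel {0..T} s\<psi>"
      unfolding s\<psi>_def by (rule set_borel_measurable_mult'[OF set_borel_measurable_cont[OF pc] um])
    show "AE x in lborel. x \<in> {0..T} \<longrightarrow> norm (s\<psi> x) \<le> norm (K + K * (u x)\<^sup>2)"
    proof (rule AE_I2, rule impI)
      fix x assume x: "x \<in> {0..T}"
      have ux: "\<bar>u x\<bar> \<le> 1 + (u x)\<^sup>2"
      proof (cases "\<bar>u x\<bar> \<le> 1")
        case True then show ?thesis using zero_le_power2[of "u x"] by linarith
      next
        case False
        have "\<bar>u x\<bar> * 1 \<le> \<bar>u x\<bar> * \<bar>u x\<bar>" using False by (intro mult_left_mono) auto
        moreover have "\<bar>u x\<bar> * \<bar>u x\<bar> = (u x)\<^sup>2" by (simp add: power2_eq_square)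
        ultimately show ?thesis by linarith
      qed
      have "norm (s\<psi> x) = norm (\<psi> x * (N - \<psi> x)) * \<bar>u x\<bar>"
        unfolding s\<psi>_def by (simp add: abs_mult)
      also have "\<dots> \<le> K * \<bar>u x\<bar>" using K(2)[OF x] by (intro mult_right_mono) auto
      also have "\<dots> \<le> K * (1 + (u x)\<^sup>2)" using K(1) ux by (intro mult_left_mono) auto
      finally have "norm (s\<psi> x) \<le> K * (1 + (u x)\<^sup>2)" .
      also have "\<dots> \<le> norm (K + K * (u x)\<^sup>2)" using K(1) by (simp add: algebra_simps)
      finally show "norm (s\<psi> x) \<le> norm (K + K * (u x)\<^sup>2)" .
    qed
  qed
  have sub: "set_integrable lborel {0..t} f" if "set_integrable lborel {0..T} f" "t \<le> T" for t and f :: "real \<Rightarrow> real"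
    by (rule set_integrable_subset[OF that(1)]) (use that in auto)
  define h where "h = (\<lambda>r. b\<psi> r + s\<psi> r)"
  have hL: "set_integrable lborel {0..T} h" unfolding h_def by (rule set_integrable_add'[OF bI sI])
  have habs: "h absolutely_integrable_on {0..T}" by (rule lborel_abs_int[OF hL])
  have hI: "h integrable_on {0..t}" if "t \<le> T" for t
    using set_borel_integral_eq_integral(1)[OF sub[OF hL that]] .
  have eqh: "\<psi> t = a + integral {0..t} h" if t: "t \<in> {0..T}" for t
  proof -
    have "\<psi> t = a + integral {0..t} b\<psi> + integral {0..t} s\<psi>"
      using eqn[OF t] set_borel_integral_eq_integral(2)[OF sub[OF bI]] set_borel_integral_eq_integral(2)[OF sub[OF sI]] t
      by (simp add: b\<psi>_def s\<psi>_def)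
    also have "\<dots> = a + integral {0..t} h"
      unfolding h_def using set_borel_integral_eq_integral(1)[OF sub[OF bI]] set_borel_integral_eq_integral(1)[OF sub[OF sI]] t
      by (subst integral_add) auto
    finally show ?thesis .
  qed
  have \<psi>0: "\<psi> 0 = a" using eqh[of 0] T by simp
  define K1 where "K1 = {0..T} \<inter> \<psi> -` {..\<rho>}"
  have K1c: "closed K1" unfolding K1_def by (rule continuous_closed_preimage[OF \<psi>c]) auto
  have TK1: "T \<in> K1" using T \<psi>T by (auto simp: K1_def)
  have K1b: "bdd_below K1" unfolding K1_def by (rule bdd_belowI[of _ 0]) auto
  define \<tau> where "\<tau> = Inf K1"
  have \<tau>K1: "\<tau> \<in> K1" unfolding \<tau>_def using closed_contains_Inf[OF _ K1b K1c] TK1 by auto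
  have \<tau>range: "0 \<le> \<tau>" "\<tau> \<le> T" using \<tau>K1 by (auto simp: K1_def)
  have before: "\<psi> r > \<rho>" if "0 \<le> r" "r < \<tau>" for r
  proof (rule ccontr)
    assume "\<not> \<psi> r > \<rho>"
    then have "r \<in> K1" using that \<tau>range by (auto simp: K1_def)
    then have "\<tau> \<le> r" unfolding \<tau>_def by (rule cInf_lower[OF _ K1b])
    then show False using that by simp
  qed
  have \<psi>\<tau>: "\<psi> \<tau> = \<rho>"
  proof -
    have le: "\<psi> \<tau> \<le> \<rho>" using \<tau>K1 by (auto simp: K1_def)
    have c0: "continuous_on {0..\<tau>} \<psi>" by (rule continuous_on_subset[OF \<psi>c]) (use \<tau>range in auto)
    obtain r where r: "r \<ge> 0" "r \<le> \<tau>" "\<psi> r = \<rho>"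
      using IVT2'[of \<psi> \<tau> \<rho> 0, OF le _ _ c0] \<psi>0 ra \<tau>range by auto
    have "r = \<tau>" using before[of r] r by force
    then show ?thesis using r by simp
  qed
  have \<tau>pos: "\<tau> > 0" using \<psi>\<tau> \<psi>0 ra \<tau>range by (cases "\<tau> = 0") auto
  define K2 where "K2 = {0..\<tau>} \<inter> \<psi> -` {a..}"
  have K2c: "closed K2" unfolding K2_def
    by (rule continuous_closed_preimage[OF continuous_on_subset[OF \<psi>c]]) (use \<tau>range in auto)
  have K20: "0 \<in> K2" using \<psi>0 \<tau>range by (auto simp: K2_def)
  have K2b: "bdd_above K2" unfolding K2_def by (rule bdd_aboveI[of _ \<tau>]) auto
  define s where "s = Sup K2"
  have sK2: "s \<in> K2" unfolding s_def using closed_contains_Sup[OF _ K2b K2c] K20 by auto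
  have srange: "0 \<le> s" "s \<le> \<tau>" using sK2 by (auto simp: K2_def)
  have after: "\<psi> r < a" if "s < r" "r \<le> \<tau>" for r
  proof (rule ccontr)
    assume "\<not> \<psi> r < a"
    then have "r \<in> K2" using that srange by (auto simp: K2_def)
    then have "r \<le> s" unfolding s_def by (rule cSup_upper[OF _ K2b])
    then show False using that by simp
  qed
  have \<psi>s: "\<psi> s = a"
  proof -
    have ge: "\<psi> s \<ge> a" using sK2 by (auto simp: K2_def)
    have c0: "continuous_on {s..\<tau>} \<psi>" by (rule continuous_on_subset[OF \<psi>c]) (use \<tau>range srange in auto)
    obtain r where r: "r \<ge> s" "r \<le> \<tau>" "\<psi> r = a"
      using IVT2'[of \<psi> \<tau> a s, OF _ ge _ c0] \<psi>\<tau> ra srange by auto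
    have "r = s" using after[of r] r by force
    then show ?thesis using r by simp
  qed
  have s\<tau>: "s < \<tau>" using srange \<psi>s \<psi>\<tau> ra by (cases "s = \<tau>") auto
  have rng: "\<psi> r \<in> {\<rho>..a}" if "r \<in> {s..\<tau>}" for r
  proof -
    have "\<psi> r \<ge> \<rho>" using before[of r] \<psi>\<tau> that srange by (cases "r < \<tau>") auto
    moreover have "\<psi> r \<le> a" using after[of r] \<psi>s that by (cases "s < r") auto
    ultimately show ?thesis by simp
  qed
  have habs': "h absolutely_integrable_on {s..\<tau>}"
    by (rule absolutely_integrable_on_subinterval[OF habs]) (use srange \<tau>range in auto)
  have eqs: "\<psi> r = \<psi> s + integral {s..r} h" if r: "r \<in> {s..\<tau>}" for r
  proof -
    have "integral {0..s} h + integral {s..r} h = integral {0..r} h"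
      using Henstock_Kurzweil_Integration.integral_combine[of 0 s r h] hI[of r] r srange \<tau>range by auto
    then show ?thesis using eqh[of r] eqh[of s] r srange \<tau>range by auto
  qed
  have ch: "G (\<psi> \<tau>) - G (\<psi> s) = integral {s..\<tau>} (\<lambda>r. g (\<psi> r) * h r)"
    by (rule chain_rule_AC[OF less_imp_le[OF s\<tau>] continuous_on_subset[OF \<psi>c] rng habs' eqs Gd gc])
       (use srange \<tau>range in auto)
  have kc: "continuous_on {s..\<tau>} (\<lambda>r. g (\<psi> r))"
    using continuous_on_compose2[OF gc continuous_on_subset[OF \<psi>c]] rng srange \<tau>range
    by (auto intro!: continuous_on_compose2[OF gc continuous_on_subset[OF \<psi>c]])
  have khI: "(\<lambda>r. g (\<psi> r) * h r) integrable_on {s..\<tau>}"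
  proof -
    have "(\<lambda>r. g (\<psi> r) * h r) absolutely_integrable_on {s..\<tau>}"
      by (rule absolutely_integrable_bounded_measurable_product_real[OF
          continuous_imp_measurable_on_sets_lebesgue[OF kc] _
          compact_imp_bounded[OF compact_continuous_image[OF kc compact_Icc]] habs']) auto
    then show ?thesis using set_lebesgue_integral_eq_integral(1) by blast
  qed
  have u2I: "(\<lambda>r. (u r)\<^sup>2) integrable_on {0..T}"
    using set_borel_integral_eq_integral(1)[OF u2] .
  have u2I': "(\<lambda>r. (u r)\<^sup>2) integrable_on {s..\<tau>}"
    by (rule integrable_subinterval_real[OF u2I]) (use srange \<tau>range in auto)
  have pw: "- (g (\<psi> r) * h r) - c \<le> (1/2) * (u r)\<^sup>2" if r: "r \<in> {s..\<tau>}" for r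
  proof -
    define x where "x = \<psi> r"
    have x: "x \<in> {\<rho>..a}" using rng[OF r] by (simp add: x_def)
    have hr: "h r = x * (\<beta> * N - \<mu> - \<gamma> - \<beta> * x) + x * (N - x) * u r"
      by (simp add: h_def b\<psi>_def s\<psi>_def x_def)
    have "(1/2) * (u r)\<^sup>2 + (x * (\<beta> * N - \<mu> - \<gamma> - \<beta> * x) + F x) / (x * (N - x))\<^sup>2 *
          (x * (\<beta> * N - \<mu> - \<gamma> - \<beta> * x) + x * (N - x) * u r) + c
          = (x * (N - x) * u r + x * (\<beta> * N - \<mu> - \<gamma> - \<beta> * x) + F x)\<^sup>2 / (2 * (x * (N - x))\<^sup>2)"
      by (rule pw_ineq[OF sp[OF x] Fsq[OF x]])
    also have "\<dots> \<ge> 0" by simp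
    finally show ?thesis using gdef[OF x] hr by (simp add: x_def)
  qed
  have "integral {s..\<tau>} (\<lambda>r. - (g (\<psi> r) * h r) - c) \<le> integral {s..\<tau>} (\<lambda>r. (1/2) * (u r)\<^sup>2)"
    by (rule integral_le) (use khI u2I' pw in \<open>auto intro!: integrable_diff integrable_neg intcm\<close>)
  moreover have "integral {s..\<tau>} (\<lambda>r. - (g (\<psi> r) * h r) - c) = - integral {s..\<tau>} (\<lambda>r. g (\<psi> r) * h r) - c * (\<tau> - s)"
    using khI s\<tau> by (subst integral_diff) (auto simp: integral_neg intro: integrable_neg)
  moreover have "integral {s..\<tau>} (\<lambda>r. (1/2) * (u r)\<^sup>2) \<le> integral {0..T} (\<lambda>r. (1/2) * (u r)\<^sup>2)"
    by (rule integral_subset_le) (use srange \<tau>range u2I u2I' in \<open>auto intro: intcm\<close>)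
  moreover have "(LINT s:{0..T}|lborel. (u s)\<^sup>2) = integral {0..T} (\<lambda>r. (u r)\<^sup>2)"
    using set_borel_integral_eq_integral(2)[OF u2] .
  moreover have "c * (\<tau> - s) \<le> c * m" using c srange \<tau>range T by (intro mult_left_mono) auto
  ultimately show ?thesis using ch \<psi>\<tau> \<psi>s by simp
qed



lemma candidate:
  fixes N \<beta> \<mu> \<gamma> a \<rho> c T :: real and \<phi> F g G :: "real \<Rightarrow> real"
  assumes ra: "\<rho> < a"
    and sp: "\<And>x. x \<in> {\<rho>..a} \<Longrightarrow> x * (N - x) > 0"
    and Fsq: "\<And>x. x \<in> {\<rho>..a} \<Longrightarrow> (F x)\<^sup>2 = (x * (\<beta> * N - \<mu> - \<gamma> - \<beta> * x))\<^sup>2 + 2 * c * (x * (N - x))\<^sup>2"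
    and Fc: "continuous_on {\<rho>..a} F"
    and gdef: "\<And>x. x \<in> {\<rho>..a} \<Longrightarrow> g x = (x * (\<beta> * N - \<mu> - \<gamma> - \<beta> * x) + F x) / (x * (N - x))\<^sup>2"
    and Gd: "\<And>x. x \<in> {\<rho>..a} \<Longrightarrow> (G has_real_derivative g x) (at x within {\<rho>..a})"
    and gc: "continuous_on {\<rho>..a} g"
    and T: "0 < T" and \<phi>c: "continuous_on {0..T} \<phi>" and \<phi>0: "\<phi> 0 = a" and \<phi>T: "\<phi> T = \<rho>"
    and \<phi>rng: "\<And>t. t \<in> {0..T} \<Longrightarrow> \<phi> t \<in> {\<rho>..a}"
    and \<phi>int: "\<And>t. t \<in> {0..T} \<Longrightarrow> ((\<lambda>r. - F (\<phi> r)) has_integral (\<phi> t - a)) {0..t}"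
  shows "admissible_control N \<beta> \<mu> \<gamma> a T \<phi>
           (\<lambda>r. - ((\<phi> r * (\<beta> * N - \<mu> - \<gamma> - \<beta> * \<phi> r) + F (\<phi> r)) / (\<phi> r * (N - \<phi> r))))"
    and "(1/2) * (LINT s:{0..T}|lborel.
           (- ((\<phi> s * (\<beta> * N - \<mu> - \<gamma> - \<beta> * \<phi> s) + F (\<phi> s)) / (\<phi> s * (N - \<phi> s))))\<^sup>2)
         = G a - G \<rho> - c * T"
proof -
  define us where "us = (\<lambda>r. - ((\<phi> r * (\<beta> * N - \<mu> - \<gamma> - \<beta> * \<phi> r) + F (\<phi> r)) / (\<phi> r * (N - \<phi> r))))"
  have Fphi: "continuous_on {0..T} (\<lambda>r. F (\<phi> r))"
    using continuous_on_compose2[OF Fc \<phi>c] \<phi>rng by blast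
  have gphi: "continuous_on {0..T} (\<lambda>r. g (\<phi> r))"
    using continuous_on_compose2[OF gc \<phi>c] \<phi>rng by blast
  have spn: "\<phi> r * (N - \<phi> r) \<noteq> 0" if "r \<in> {0..T}" for r
  proof -
    have "0 < \<phi> r * (N - \<phi> r)" using sp[OF \<phi>rng[OF that]] by simp
    then show ?thesis by linarith
  qed
  have usc: "continuous_on {0..T} us"
    unfolding us_def using \<phi>c Fphi spn by (intro continuous_intros) auto
  have usq: "continuous_on {0..T} (\<lambda>r. (us r)\<^sup>2)" using usc by (intro continuous_intros)
  have bc: "continuous_on {0..T} (\<lambda>s. \<phi> s * (\<beta> * N - \<mu> - \<gamma> - \<beta> * \<phi> s))"
    using \<phi>c by (intro continuous_intros)
  have sc: "continuous_on {0..T} (\<lambda>s. \<phi> s * (N - \<phi> s) * us s)"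
    using \<phi>c usc by (intro continuous_intros)
  have pw0: "\<phi> r * (\<beta> * N - \<mu> - \<gamma> - \<beta> * \<phi> r) + \<phi> r * (N - \<phi> r) * us r = - F (\<phi> r)"
    if "r \<in> {0..T}" for r
    using spn[OF that] by (simp add: us_def field_simps)
  have adm: "admissible_control N \<beta> \<mu> \<gamma> a T \<phi> us"
    unfolding admissible_control_def
  proof (intro conjI ballI)
    show "set_borel_measurable lborel {0..T} us"
      using borel_integrable_atLeastAtMost'[OF usc]
      unfolding set_integrable_def set_borel_measurable_def by (rule borel_measurable_integrable)
    show "set_integrable lborel {0..T} (\<lambda>s. (us s)\<^sup>2)"
      by (rule borel_integrable_atLeastAtMost'[OF usq])
    fix t assume t: "t \<in> {0..T}"
    have bc': "continuous_on {0..t} (\<lambda>s. \<phi> s * (\<beta> * N - \<mu> - \<gamma> - \<beta> * \<phi> s))"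
      using bc t by (auto intro: continuous_on_subset)
    have sc': "continuous_on {0..t} (\<lambda>s. \<phi> s * (N - \<phi> s) * us s)"
      using sc t by (auto intro: continuous_on_subset)
    have "(LINT s:{0..t}|lborel. \<phi> s * (\<beta> * N - \<mu> - \<gamma> - \<beta> * \<phi> s))
        + (LINT s:{0..t}|lborel. \<phi> s * (N - \<phi> s) * us s)
        = integral {0..t} (\<lambda>s. \<phi> s * (\<beta> * N - \<mu> - \<gamma> - \<beta> * \<phi> s))
          + integral {0..t} (\<lambda>s. \<phi> s * (N - \<phi> s) * us s)"
      using set_borel_integral_eq_integral(2)[OF borel_integrable_atLeastAtMost'[OF bc']]
            set_borel_integral_eq_integral(2)[OF borel_integrable_atLeastAtMost'[OF sc']] by simp
    also have "\<dots> = integral {0..t} (\<lambda>s. \<phi> s * (\<beta> * N - \<mu> - \<gamma> - \<beta> * \<phi> s) + \<phi> s * (N - \<phi> s) * us s)"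
      by (rule integral_add[symmetric]) (auto intro: integrable_continuous_real bc' sc')
    also have "\<dots> = integral {0..t} (\<lambda>r. - F (\<phi> r))"
      by (rule integral_cong) (use pw0 t in auto)
    also have "\<dots> = \<phi> t - a" using \<phi>int[OF t] by (rule integral_unique)
    finally show "\<phi> t = a + (LINT s:{0..t}|lborel. \<phi> s * (\<beta> * N - \<mu> - \<gamma> - \<beta> * \<phi> s))
        + (LINT s:{0..t}|lborel. \<phi> s * (N - \<phi> s) * us s)" by simp
  qed
  then show "admissible_control N \<beta> \<mu> \<gamma> a T \<phi>
           (\<lambda>r. - ((\<phi> r * (\<beta> * N - \<mu> - \<gamma> - \<beta> * \<phi> r) + F (\<phi> r)) / (\<phi> r * (N - \<phi> r))))"
    by (simp add: us_def)
  define h where "h = (\<lambda>r. - F (\<phi> r))"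
  have hc: "continuous_on {0..T} h" unfolding h_def using Fphi by (intro continuous_intros)
  have eqs: "\<phi> r = \<phi> 0 + integral {0..r} h" if "r \<in> {0..T}" for r
    using integral_unique[OF \<phi>int[OF that]] \<phi>0 by (simp add: h_def)
  have ch: "G (\<phi> T) - G (\<phi> 0) = integral {0..T} (\<lambda>r. g (\<phi> r) * h r)"
    by (rule chain_rule_AC[OF less_imp_le[OF T] \<phi>c \<phi>rng absolutely_integrable_continuous_real[OF hc] eqs Gd gc])
  have pw: "(1/2) * (us r)\<^sup>2 = - (g (\<phi> r) * h r) - c" if r: "r \<in> {0..T}" for r
  proof -
    define x where "x = \<phi> r"
    have x: "x \<in> {\<rho>..a}" using \<phi>rng[OF r] by (simp add: x_def)
    have e: "(1/2) * (us r)\<^sup>2 + (x * (\<beta> * N - \<mu> - \<gamma> - \<beta> * x) + F x) / (x * (N - x))\<^sup>2 *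
          (x * (\<beta> * N - \<mu> - \<gamma> - \<beta> * x) + x * (N - x) * us r) + c
          = (x * (N - x) * us r + x * (\<beta> * N - \<mu> - \<gamma> - \<beta> * x) + F x)\<^sup>2 / (2 * (x * (N - x))\<^sup>2)"
      by (rule pw_ineq[OF sp[OF x] Fsq[OF x]])
    have z: "x * (N - x) * us r + x * (\<beta> * N - \<mu> - \<gamma> - \<beta> * x) + F x = 0"
      using pw0[OF r] by (simp add: x_def algebra_simps)
    have "x * (\<beta> * N - \<mu> - \<gamma> - \<beta> * x) + x * (N - x) * us r = h r"
      using pw0[OF r] by (simp add: x_def h_def)
    then show ?thesis using e z gdef[OF x] by (simp add: x_def)
  qed
  have "(LINT s:{0..T}|lborel. (us s)\<^sup>2) = integral {0..T} (\<lambda>r. (us r)\<^sup>2)"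
    using set_borel_integral_eq_integral(2)[OF borel_integrable_atLeastAtMost'[OF usq]] .
  then have "(1/2) * (LINT s:{0..T}|lborel. (us s)\<^sup>2) = integral {0..T} (\<lambda>r. (1/2) * (us r)\<^sup>2)"
    by simp
  also have "\<dots> = integral {0..T} (\<lambda>r. - (g (\<phi> r) * h r) - c)"
    by (rule integral_cong) (use pw in auto)
  also have "\<dots> = - integral {0..T} (\<lambda>r. g (\<phi> r) * h r) - c * T"
    using T gphi hc
    by (subst integral_diff) (auto simp: integral_neg intro!: integrable_neg integrable_continuous_real continuous_intros)
  also have "\<dots> = G a - G \<rho> - c * T" using ch \<phi>0 \<phi>T by simp
  finally show "(1/2) * (LINT s:{0..T}|lborel.
           (- ((\<phi> s * (\<beta> * N - \<mu> - \<gamma> - \<beta> * \<phi> s) + F (\<phi> s)) / (\<phi> s * (N - \<phi> s))))\<^sup>2)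
         = G a - G \<rho> - c * T" by (simp add: us_def)
qed



lemma main_core:
  fixes N \<beta> \<mu> \<gamma> a m \<rho> :: real
  assumes N: "N > 0" and \<beta>: "\<beta> > 0" and \<mu>: "\<mu> > 0" and \<gamma>: "\<gamma> > 0"
    and \<rho>: "0 < \<rho>" and ra: "\<rho> < a" and as: "a < N - (\<mu> + \<gamma>) / \<beta>" and m: "m > 0"
  shows "\<exists>T \<phi>. 0 < T \<and> T \<le> m \<and> continuous_on {0..T} \<phi> \<and>
               (\<forall>s\<in>{0..T}. \<forall>t\<in>{0..T}. s \<le> t \<longrightarrow> \<phi> t \<le> \<phi> s) \<and>
               \<phi> T = \<rho> \<and> (\<forall>t\<in>{0..<T}. \<phi> t \<noteq> \<rho>) \<and>
               Vbar N \<beta> \<mu> \<gamma> a m \<rho> = rate_fun N \<beta> \<mu> \<gamma> a T \<phi> \<and>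
               (\<forall>t\<in>{0..T}. \<rho> \<le> \<phi> t \<and> \<phi> t \<le> a)"
proof -
  define b where "b = (\<lambda>x::real. x * (\<beta> * N - \<mu> - \<gamma> - \<beta> * x))"
  define \<sigma> where "\<sigma> = (\<lambda>x::real. x * (N - x))"
  have bp: "b x > 0" if "x \<in> {\<rho>..a}" for x
  proof -
    have "\<beta> * a < \<beta> * (N - (\<mu> + \<gamma>) / \<beta>)" using as \<beta> by simp
    also have "\<dots> = \<beta> * N - \<mu> - \<gamma>" using \<beta> by (simp add: field_simps)
    finally have ba: "\<beta> * a < \<beta> * N - \<mu> - \<gamma>" .
    moreover have "\<beta> * x \<le> \<beta> * a" using that \<beta> by (intro mult_left_mono) auto
    ultimately have "\<beta> * x < \<beta> * N - \<mu> - \<gamma>" by linarith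
    then show ?thesis using that \<rho> by (simp add: b_def)
  qed
  have sp: "\<sigma> x > 0" if "x \<in> {\<rho>..a}" for x
  proof -
    have "(\<mu> + \<gamma>) / \<beta> > 0" using \<beta> \<mu> \<gamma> by simp
    then have "x < N" using that as by simp
    then show ?thesis using that \<rho> by (simp add: \<sigma>_def)
  qed
  have bc: "continuous_on {\<rho>..a} b" unfolding b_def by (intro continuous_intros)
  have sc: "continuous_on {\<rho>..a} \<sigma>" unfolding \<sigma>_def by (intro continuous_intros)
  obtain c where c: "c \<ge> 0" and cT: "integral {\<rho>..a} (\<lambda>y. 1 / sqrt ((b y)\<^sup>2 + 2 * c * (\<sigma> y)\<^sup>2)) \<le> m"
    and cT2: "c = 0 \<or> integral {\<rho>..a} (\<lambda>y. 1 / sqrt ((b y)\<^sup>2 + 2 * c * (\<sigma> y)\<^sup>2)) = m"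
    using choose_c[OF ra bc sc bp sp m] by blast
  define F where "F = (\<lambda>y. sqrt ((b y)\<^sup>2 + 2 * c * (\<sigma> y)\<^sup>2))"
  have Fc: "continuous_on {\<rho>..a} F" unfolding F_def b_def \<sigma>_def by (intro continuous_intros)
  have Fp: "F y > 0" if "y \<in> {\<rho>..a}" for y
  proof -
    have "0 < (b y)\<^sup>2" using bp[OF that] by simp
    moreover have "0 \<le> 2 * c * (\<sigma> y)\<^sup>2" using c by simp
    ultimately have "0 < (b y)\<^sup>2 + 2 * c * (\<sigma> y)\<^sup>2" by linarith
    then show ?thesis unfolding F_def by simp
  qed
  have Fsq: "(F x)\<^sup>2 = (x * (\<beta> * N - \<mu> - \<gamma> - \<beta> * x))\<^sup>2 + 2 * c * (x * (N - x))\<^sup>2" for x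
  proof -
    have "0 \<le> (b x)\<^sup>2 + 2 * c * (\<sigma> x)\<^sup>2" using c by simp
    then show ?thesis unfolding F_def by (simp add: b_def \<sigma>_def)
  qed
  define T where "T = integral {\<rho>..a} (\<lambda>y. 1 / F y)"
  have Tm: "T \<le> m" and Tm2: "c = 0 \<or> T = m" using cT cT2 by (simp_all add: T_def F_def)
  obtain \<phi> where T0: "T > 0" and \<phi>c: "continuous_on {0..T} \<phi>" and \<phi>0: "\<phi> 0 = a" and \<phi>T: "\<phi> T = \<rho>"
    and \<phi>rng: "\<forall>t\<in>{0..T}. \<phi> t \<in> {\<rho>..a}"
    and \<phi>strict: "\<forall>s\<in>{0..T}. \<forall>t\<in>{0..T}. s < t \<longrightarrow> \<phi> t < \<phi> s"
    and \<phi>int: "\<forall>t\<in>{0..T}. ((\<lambda>r. - F (\<phi> r)) has_integral (\<phi> t - a)) {0..t}"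
    using inverse_path[OF ra Fc Fp] unfolding T_def by blast
  define g where "g = (\<lambda>x. (b x + F x) / (\<sigma> x)\<^sup>2)"
  have gc: "continuous_on {\<rho>..a} g"
    unfolding g_def using Fc bc sc sp by (intro continuous_intros) force+
  have gdef: "g x = (x * (\<beta> * N - \<mu> - \<gamma> - \<beta> * x) + F x) / (x * (N - x))\<^sup>2" for x
    by (simp add: g_def b_def \<sigma>_def)
  define G where "G = (\<lambda>x. integral {\<rho>..x} g)"
  have Gd: "(G has_real_derivative g x) (at x within {\<rho>..a})" if "x \<in> {\<rho>..a}" for x
    unfolding G_def by (rule integral_has_real_derivative[OF gc that])
  have sp': "x * (N - x) > 0" if "x \<in> {\<rho>..a}" for x using sp[OF that] by (simp add: \<sigma>_def)
  define us where "us = (\<lambda>r. - ((\<phi> r * (\<beta> * N - \<mu> - \<gamma> - \<beta> * \<phi> r) + F (\<phi> r)) / (\<phi> r * (N - \<phi> r))))"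
  have cand: "admissible_control N \<beta> \<mu> \<gamma> a T \<phi> us"
     "(1/2) * (LINT s:{0..T}|lborel. (us s)\<^sup>2) = G a - G \<rho> - c * T"
    using candidate[of \<rho> a N F \<beta> \<mu> \<gamma> c g G T \<phi>, OF ra sp' Fsq Fc gdef Gd gc T0 \<phi>c \<phi>0 \<phi>T]
      \<phi>rng \<phi>int unfolding us_def by auto
  define LB where "LB = G a - G \<rho> - c * m"
  have costLB: "(1/2) * (LINT s:{0..T}|lborel. (us s)\<^sup>2) = LB"
    using cand(2) Tm2 by (auto simp: LB_def)
  have lbr: "ereal LB \<le> rate_fun N \<beta> \<mu> \<gamma> a T' \<psi>"
    if "0 < T'" "T' \<le> m" "continuous_on {0..T'} \<psi>" "\<psi> T' = \<rho>" for T' \<psi>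
    unfolding rate_fun_def
  proof (rule Inf_greatest, clarify)
    fix u assume adm: "admissible_control N \<beta> \<mu> \<gamma> a T' \<psi> u"
    show "ereal LB \<le> ereal ((1/2) * (LINT s:{0..T'}|lborel. (u s)\<^sup>2))"
      using lower_bound[of \<rho> a N F \<beta> \<mu> \<gamma> c g G T' m \<psi> u, OF ra sp' Fsq gdef Gd gc c that adm]
      by (simp add: LB_def)
  qed
  have V1: "ereal LB \<le> Vbar N \<beta> \<mu> \<gamma> a m \<rho>"
    unfolding Vbar_def by (rule Inf_greatest) (auto intro: lbr)
  have R1: "rate_fun N \<beta> \<mu> \<gamma> a T \<phi> \<le> ereal LB"
    unfolding rate_fun_def using costLB cand(1) by (intro Inf_lower) force
  have V2: "Vbar N \<beta> \<mu> \<gamma> a m \<rho> \<le> rate_fun N \<beta> \<mu> \<gamma> a T \<phi>"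
    unfolding Vbar_def using T0 Tm \<phi>c \<phi>T by (intro Inf_lower) blast
  have Veq: "Vbar N \<beta> \<mu> \<gamma> a m \<rho> = rate_fun N \<beta> \<mu> \<gamma> a T \<phi>"
    using V1 R1 V2 by (meson antisym order_trans)
  show ?thesis
  proof (intro exI[of _ T] exI[of _ \<phi>] conjI ballI impI)
    show "0 < T" "T \<le> m" "continuous_on {0..T} \<phi>" "\<phi> T = \<rho>" by fact+
    show "Vbar N \<beta> \<mu> \<gamma> a m \<rho> = rate_fun N \<beta> \<mu> \<gamma> a T \<phi>" by (rule Veq)
  next
    fix s t assume "s \<in> {0..T}" "t \<in> {0..T}" "s \<le> t"
    then show "\<phi> t \<le> \<phi> s" using \<phi>strict by (cases "s = t") (auto intro: less_imp_le)
  next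
    fix t assume "t \<in> {0..<T}"
    then show "\<phi> t \<noteq> \<rho>" using \<phi>strict \<phi>T T0 by fastforce
  next
    fix t assume "t \<in> {0..T}"
    then show "\<rho> \<le> \<phi> t" "\<phi> t \<le> a" using \<phi>rng by auto
  qed
qed

theorem lemma2:
  fixes N \<beta> \<mu> \<gamma> :: real
  assumes "N > 0" "\<beta> > 0" "\<mu> > 0" "\<gamma> > 0"
    and "\<beta> * N / (\<mu> + \<gamma>) > 1"
  shows "\<exists>\<delta>1 > 0. \<forall>\<delta>0 m \<rho>. 0 < \<delta>0 \<and> \<delta>0 < \<delta>1 \<and> m > 0 \<and>
            0 < \<rho> \<and> \<rho> < (N - (\<mu> + \<gamma>) / \<beta>) - \<delta>0 \<and>
            Vbar N \<beta> \<mu> \<gamma> ((N - (\<mu> + \<gamma>) / \<beta>) - \<delta>0) m \<rho> < \<infinity> \<longrightarrow>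
            (\<exists>T \<phi>. 0 < T \<and> T \<le> m \<and> continuous_on {0..T} \<phi> \<and>
               (\<forall>s\<in>{0..T}. \<forall>t\<in>{0..T}. s \<le> t \<longrightarrow> \<phi> t \<le> \<phi> s) \<and>
               \<phi> T = \<rho> \<and> (\<forall>t\<in>{0..<T}. \<phi> t \<noteq> \<rho>) \<and>
               Vbar N \<beta> \<mu> \<gamma> ((N - (\<mu> + \<gamma>) / \<beta>) - \<delta>0) m \<rho> =
                 rate_fun N \<beta> \<mu> \<gamma> ((N - (\<mu> + \<gamma>) / \<beta>) - \<delta>0) T \<phi> \<and>
               (\<forall>t\<in>{0..T}. \<rho> \<le> \<phi> t \<and> \<phi> t \<le> (N - (\<mu> + \<gamma>) / \<beta>) - \<delta>0))"
  apply (rule exI[of _ "1::real"])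
  apply (intro conjI allI impI)
   apply simp
  apply (elim conjE)
  apply (rule main_core)
  using assms apply auto
  done



end
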